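(* Let $\alpha:R\to R'$ be a Jordan homomorphism of rings and let $T=(t_1,\ldots,t_n)\in R^n$, $n\geq 0$; write $T^\alpha=(t_1^\alpha,\ldots,t_n^\alpha)$. Then: (a) if $e^{(n)}(T)\in R^*$ then $e^{(n)}(T^\alpha)\in R'^*$; (b) if $e^{(n)}(T)\in R^*$ and $e^{(n-1)}(T)=0$ then $e^{(n-1)}(T^\alpha)=0'$.
   Context: Rings are associative with $1$; $R^*$ denotes the group of units. A Jordan homomorphism $\alpha:R\to R'$ is a map with $(a+b)^\alpha=a^\alpha+b^\alpha$, $1^\alpha=1'$, $(aba)^\alpha=a^\alpha b^\alpha a^\alpha$ for all $a,b\in R$. Let $\mathbb{Z}\langle X\rangle$ be the free $\mathbb{Z}$-algebra on non-commuting indeterminates $x_1,x_2,\ldots$; define $e^{(-2)}:=-1$, $e^{(-1)}:=0$, $e^{(0)}:=1$, $e^{(n)}:=e^{(n-1)}x_n-e^{(n-2)}$ for $n\geq1$. For a finite sequence $S=(s_1,\ldots,s_m)$ in a ring, $e^{(k)}(S)$ is the image of $e^{(k)}$ under $x_i\mapsto s_i$ ($i\leq m$), $x_i\mapsto 0$ ($i>m$); in particular $e^{(n-1)}(T)=e^{(n-1)}(t_1,\ldots,t_{n-1})$. *)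

theory Defs
  imports Main
begin

definition jordan_hom :: "('a::ring_1 \<Rightarrow> 'b::ring_1) \<Rightarrow> bool" where
  "jordan_hom f \<longleftrightarrow> (\<forall>a b. f (a + b) = f a + f b) \<and> f 1 = 1 \<and>
     (\<forall>a b. f (a * b * a) = f a * f b * f a)"

definition ring_unit :: "'a::ring_1 \<Rightarrow> bool" where
  "ring_unit x \<longleftrightarrow> (\<exists>y. x * y = 1 \<and> y * x = 1)"

text \<open>e_shift s (k+2) is e^(k) evaluated at x_i := s i (k \<ge> -2).\<close>
fun e_shift :: "(nat \<Rightarrow> 'a::ring_1) \<Rightarrow> nat \<Rightarrow> 'a" where
  "e_shift s 0 = -1"
| "e_shift s (Suc 0) = 0"
| "e_shift s (Suc (Suc n)) = e_shift s (Suc n) * s n - e_shift s n"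

definition e_seq :: "int \<Rightarrow> 'a::ring_1 list \<Rightarrow> 'a" where
  "e_seq k S = e_shift (\<lambda>i. if 1 \<le> i \<and> i \<le> length S then S ! (i - 1) else 0) (nat (k + 2))"

end

theory Submission
  imports Defs
begin

fun F :: "(nat \<Rightarrow> 'a::ring_1) \<Rightarrow> nat \<Rightarrow> 'a" where
  "F s 0 = -1"
| "F s (Suc 0) = 0"
| "F s (Suc (Suc n)) = s n * F s (Suc n) - F s n"

lemma mat_ids:
  fixes s :: "nat \<Rightarrow> 'a::ring_1"
  defines "s' \<equiv> (\<lambda>i. s (Suc i))"
  shows "let a = e_shift s (k+2); b = e_shift s (k+1); f = e_shift s' (k+1); g = e_shift s' k;
             a' = F s (k+2); b' = F s (k+1); f' = F s' (k+1); g' = F s' k in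
     b*f' - a*g' = 1 \<and> b*a' = a*b' \<and> f*g' = g*f' \<and> f*b' - g*a' = 1 \<and>
     b'*f - g'*a = 1 \<and> b'*g = g'*b \<and> f'*a = a'*f \<and> f'*b - a'*g = 1"
proof (induction k)
  case 0
  then show ?case by (simp add: s'_def numeral_2_eq_2)
next
  case (Suc k)
  define a where "a = e_shift s (k+2)"
  define b where "b = e_shift s (k+1)"
  define f where "f = e_shift s' (k+1)"
  define g where "g = e_shift s' k"
  define a' where "a' = F s (k+2)"
  define b' where "b' = F s (k+1)"
  define f' where "f' = F s' (k+1)"
  define g' where "g' = F s' k"
  define x where "x = s (k+1)"
  have IH: "b*f' - a*g' = 1" "b*a' = a*b'" "f*g' = g*f'" "f*b' - g*a' = 1"
     "b'*f - g'*a = 1" "b'*g = g'*b" "f'*a = a'*f" "f'*b - a'*g = 1"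
    using Suc.IH unfolding Let_def a_def b_def f_def g_def a'_def b'_def f'_def g'_def by auto
  have an: "e_shift s (Suc k+2) = a*x - b" unfolding a_def b_def x_def
    by (simp add: numeral_2_eq_2)
  have bn: "e_shift s (Suc k+1) = a" unfolding a_def by (simp add: numeral_2_eq_2)
  have fn: "e_shift s' (Suc k+1) = f*x - g" unfolding f_def g_def x_def s'_def
    by (cases k) (simp_all add: numeral_2_eq_2)
  have gn: "e_shift s' (Suc k) = f" unfolding f_def by simp
  have an': "F s (Suc k+2) = x*a' - b'" unfolding a'_def b'_def x_def
    by (simp add: numeral_2_eq_2)
  have bn': "F s (Suc k+1) = a'" unfolding a'_def by (simp add: numeral_2_eq_2)
  have fn': "F s' (Suc k+1) = x*f' - g'" unfolding f'_def g'_def x_def s'_def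
    by (cases k) (simp_all add: numeral_2_eq_2)
  have gn': "F s' (Suc k) = f'" unfolding f'_def by simp
  have 1: "a*(x*f' - g') - (a*x - b)*g'' = b*f' - a*g'" if "g'' = f'" for g''
    using that by (simp add: algebra_simps)
  have e1: "a*(x*f' - g') - (a*x - b)*f' = 1" using IH(1) by (simp add: algebra_simps)
  have e2: "a*(x*a' - b') = (a*x - b)*a'" using IH(2) by (simp add: algebra_simps)
  have e3: "(f*x - g)*f' = f*(x*f' - g')" using IH(3) by (simp add: algebra_simps)
  have e4: "(f*x - g)*a' - f*(x*a' - b') = 1" using IH(4) by (simp add: algebra_simps)
  have e5: "a'*(f*x - g) - f'*(a*x - b) = 1"
  proof -
    have "a'*(f*x - g) - f'*(a*x - b) = (a'*f - f'*a)*x + (f'*b - a'*g)" by (simp add: algebra_simps)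
    then show ?thesis using IH(7,8) by simp
  qed
  have e6: "a'*f = f'*a" using IH(7) by simp
  have e7: "(x*f' - g')*(a*x - b) = (x*a' - b')*(f*x - g)"
  proof -
    have "(x*f' - g')*(a*x - b) - (x*a' - b')*(f*x - g)
       = x*(f'*a - a'*f)*x - x*(f'*b - a'*g) + (b'*f - g'*a)*x + (g'*b - b'*g)"
      by (simp add: algebra_simps)
    also have "\<dots> = 0" using IH by simp
    finally show ?thesis by simp
  qed
  have e8: "(x*f' - g')*a - (x*a' - b')*f = 1"
  proof -
    have "(x*f' - g')*a - (x*a' - b')*f = x*(f'*a - a'*f) + (b'*f - g'*a)" by (simp add: algebra_simps)
    then show ?thesis using IH by simp
  qed
  show ?case unfolding Let_def an bn fn gn an' bn' fn' gn'
    using e1 e2 e3 e4 e5 e6 e7 e8 by simp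
qed


lemma jh_basic:
  assumes "jordan_hom \<alpha>"
  shows "\<alpha> (x + y) = \<alpha> x + \<alpha> y" "\<alpha> 1 = 1" "\<alpha> (x*y*x) = \<alpha> x * \<alpha> y * \<alpha> x"
    "\<alpha> 0 = 0" "\<alpha> (-x) = - \<alpha> x" "\<alpha> (x - y) = \<alpha> x - \<alpha> y"
proof -
  show h1: "\<alpha> (x + y) = \<alpha> x + \<alpha> y" "\<alpha> 1 = 1" "\<alpha> (x*y*x) = \<alpha> x * \<alpha> y * \<alpha> x"
    using assms unfolding jordan_hom_def by auto
  have ad: "\<And>u v. \<alpha> (u + v) = \<alpha> u + \<alpha> v" using assms unfolding jordan_hom_def by auto
  have "\<alpha> (0+0) = \<alpha> 0 + \<alpha> 0" by (rule ad)
  then show z: "\<alpha> 0 = 0" by simp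
  have n: "\<And>u. \<alpha> (-u) = - \<alpha> u"
  proof -
    fix u
    have "\<alpha> (u + -u) = \<alpha> u + \<alpha> (-u)" by (rule ad)
    then have "\<alpha> u + \<alpha> (-u) = 0" using z by simp
    then show "\<alpha> (-u) = - \<alpha> u" by (simp add: eq_neg_iff_add_eq_0 add.commute)
  qed
  then show "\<alpha> (-x) = - \<alpha> x" .
  show "\<alpha> (x - y) = \<alpha> x - \<alpha> y" using ad[of x "-y"] n[of y] by simp
qed

lemma jh_triple:
  assumes "jordan_hom \<alpha>"
  shows "\<alpha> (x*y*z + z*y*x) = \<alpha> x * \<alpha> y * \<alpha> z + \<alpha> z * \<alpha> y * \<alpha> x"
proof -
  note J = jh_basic[OF assms]
  have "(x+z)*y*(x+z) = x*y*x + (x*y*z + z*y*x) + z*y*z" by (simp add: algebra_simps)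
  then have "\<alpha> ((x+z)*y*(x+z)) = \<alpha> (x*y*x) + \<alpha> (x*y*z + z*y*x) + \<alpha> (z*y*z)"
    by (simp add: J(1))
  moreover have "\<alpha> ((x+z)*y*(x+z)) = (\<alpha> x + \<alpha> z) * \<alpha> y * (\<alpha> x + \<alpha> z)"
    by (simp add: J(1,3))
  moreover have "(\<alpha> x + \<alpha> z) * \<alpha> y * (\<alpha> x + \<alpha> z) = \<alpha> x * \<alpha> y * \<alpha> x +
      (\<alpha> x * \<alpha> y * \<alpha> z + \<alpha> z * \<alpha> y * \<alpha> x) + \<alpha> z * \<alpha> y * \<alpha> z"
    by (simp add: algebra_simps)
  ultimately show ?thesis by (simp add: J(3))
qed

definition QQ where "QQ s m c = e_shift s m * c * F s m"
definition YY where "YY s m t c = e_shift s (Suc m) * (t*c) * F s m + e_shift s m * (c*t) * F s (Suc m)"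

lemma QQ_rec: "QQ s (Suc (Suc m)) c = QQ s (Suc m) (s m * c * s m) - YY s m (s m) c + QQ s m c"
  unfolding QQ_def YY_def by (simp add: algebra_simps)

lemma YY_rec: "YY s (Suc (Suc m)) t c = QQ s (Suc (Suc m)) (s (Suc m) * t * c + c * t * s (Suc m)) - YY s (Suc m) c t"
  unfolding QQ_def YY_def by (simp add: algebra_simps)

lemma QY_pres:
  assumes J: "jordan_hom \<alpha>"
  shows "(\<forall>c. \<alpha> (QQ s m c) = QQ (\<lambda>i. \<alpha> (s i)) m (\<alpha> c)) \<and> (\<forall>t c. \<alpha> (YY s m t c) = YY (\<lambda>i. \<alpha> (s i)) m (\<alpha> t) (\<alpha> c))
       \<and> (\<forall>c. \<alpha> (QQ s (Suc m) c) = QQ (\<lambda>i. \<alpha> (s i)) (Suc m) (\<alpha> c)) \<and> (\<forall>t c. \<alpha> (YY s (Suc m) t c) = YY (\<lambda>i. \<alpha> (s i)) (Suc m) (\<alpha> t) (\<alpha> c))"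
proof (induction m)
  case 0
  then show ?case using jh_basic[OF J] by (simp add: QQ_def YY_def)
next
  case (Suc m)
  note B = jh_basic[OF J]
  have q: "\<alpha> (QQ s (Suc (Suc m)) c) = QQ (\<lambda>i. \<alpha> (s i)) (Suc (Suc m)) (\<alpha> c)" for c
    unfolding QQ_rec using Suc.IH by (simp add: B)
  have y: "\<alpha> (YY s (Suc (Suc m)) t c) = YY (\<lambda>i. \<alpha> (s i)) (Suc (Suc m)) (\<alpha> t) (\<alpha> c)" for t c
    unfolding YY_rec B(6) q jh_triple[OF J] using Suc.IH by simp
  show ?case using Suc.IH q y by simp
qed

lemma sym_id: "e_shift s (Suc m) * F s m = e_shift s m * F s (Suc m)"
proof (induction m rule: nat_less_induct)
  case (1 n)
  show ?case
  proof (cases n)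
    case 0 then show ?thesis by simp
  next
    case (Suc k)
    show ?thesis
    proof (cases k)
      case 0 then show ?thesis using Suc by simp
    next
      case (Suc j)
      have "e_shift s (Suc j) * F s j = e_shift s j * F s (Suc j)" using 1 \<open>n = Suc k\<close> Suc by simp
      then show ?thesis using \<open>n = Suc k\<close> Suc by (simp add: algebra_simps)
    qed
  qed
qed

lemma W_pres:
  assumes J: "jordan_hom \<alpha>"
  shows "\<alpha> (e_shift s m * F s (Suc m)) = e_shift (\<lambda>i. \<alpha> (s i)) m * F (\<lambda>i. \<alpha> (s i)) (Suc m)"
proof (induction m)
  case 0 then show ?case using jh_basic[OF J] by simp
next
  case (Suc m)
  have "e_shift s (Suc m) * F s (Suc (Suc m)) = QQ s (Suc m) (s m) - e_shift s m * F s (Suc m)"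
    unfolding QQ_def using sym_id[of s m] by (simp add: algebra_simps)
  moreover have "e_shift (\<lambda>i. \<alpha> (s i)) (Suc m) * F (\<lambda>i. \<alpha> (s i)) (Suc (Suc m)) = QQ (\<lambda>i. \<alpha> (s i)) (Suc m) (\<alpha> (s m)) - e_shift (\<lambda>i. \<alpha> (s i)) m * F (\<lambda>i. \<alpha> (s i)) (Suc m)"
    unfolding QQ_def using sym_id[of "\<lambda>i. \<alpha> (s i)" m] by (simp add: algebra_simps)
  ultimately show ?case using Suc QY_pres[OF J, of s "Suc m"] by (simp add: jh_basic[OF J])
qed


lemma unit_star:
  fixes s :: "nat \<Rightarrow> 'a::ring_1"
  assumes "ring_unit (e_shift s (k+2))"
  shows "ring_unit (F s (k+2))"
proof -
  define s' where "s' = (\<lambda>i. s (Suc i))"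
  define a where "a = e_shift s (k+2)"
  define b where "b = e_shift s (k+1)"
  define f where "f = e_shift s' (k+1)"
  define g where "g = e_shift s' k"
  define a' where "a' = F s (k+2)"
  define b' where "b' = F s (k+1)"
  define f' where "f' = F s' (k+1)"
  define g' where "g' = F s' k"
  have I: "b*f' - a*g' = 1" "b*a' = a*b'" "f*g' = g*f'" "f*b' - g*a' = 1"
     "b'*f - g'*a = 1" "b'*g = g'*b" "f'*a = a'*f" "f'*b - a'*g = 1"
    using mat_ids[of s k] unfolding Let_def a_def b_def f_def g_def a'_def b'_def f'_def g'_def s'_def
    by auto
  obtain y where y: "a*y = 1" "y*a = 1" using assms unfolding ring_unit_def a_def by auto
  define w where "w = -g + f*y*b"
  have "a'*w = f'*b - a'*g"
  proof -
    have "a'*w = -(a'*g) + (a'*f)*y*b" unfolding w_def by (simp add: algebra_simps)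
    also have "\<dots> = -(a'*g) + f'*(a*y)*b" using I(7) by (metis mult.assoc)
    finally show ?thesis using y by simp
  qed
  moreover have "w*a' = f*b' - g*a'"
  proof -
    have "w*a' = -(g*a') + f*y*(b*a')" unfolding w_def by (simp add: algebra_simps)
    also have "\<dots> = -(g*a') + f*(y*a)*b'" using I(2) by (simp add: mult.assoc)
    finally show ?thesis using y by simp
  qed
  ultimately have "a'*w = 1" "w*a' = 1" using I(4,8) by auto
  then show ?thesis unfolding ring_unit_def a'_def[symmetric] by blast
qed

lemma unit_from_sides:
  fixes s :: "nat \<Rightarrow> 'a::ring_1"
  assumes "e_shift s (k+2) * u = 1" "v * F s (k+2) = 1"
  shows "ring_unit (e_shift s (k+2))"
proof -
  define s' where "s' = (\<lambda>i. s (Suc i))"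
  define a where "a = e_shift s (k+2)"
  define b where "b = e_shift s (k+1)"
  define f where "f = e_shift s' (k+1)"
  define g where "g = e_shift s' k"
  define a' where "a' = F s (k+2)"
  define b' where "b' = F s (k+1)"
  define f' where "f' = F s' (k+1)"
  define g' where "g' = F s' k"
  have I: "b*f' - a*g' = 1" "b*a' = a*b'" "f*g' = g*f'" "f*b' - g*a' = 1"
     "b'*f - g'*a = 1" "b'*g = g'*b" "f'*a = a'*f" "f'*b - a'*g = 1"
    using mat_ids[of s k] unfolding Let_def a_def b_def f_def g_def a'_def b'_def f'_def g'_def s'_def
    by auto
  have u: "a*u = 1" and v: "v*a' = 1" using assms unfolding a_def a'_def by auto
  define L where "L = -g' + b'*v*f'"
  have "L*a = b'*f - g'*a"
  proof -
    have "L*a = -(g'*a) + b'*v*(f'*a)" unfolding L_def by (simp add: algebra_simps)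
    also have "\<dots> = -(g'*a) + b'*(v*a')*f" using I(7) by (simp add: mult.assoc)
    finally show ?thesis using v by simp
  qed
  then have La: "L*a = 1" using I(5) by simp
  have "L = u" using La u by (metis mult.assoc mult_1_left mult_1_right)
  then show ?thesis unfolding ring_unit_def a_def[symmetric] using u La by auto
qed

lemma part_a:
  fixes s :: "nat \<Rightarrow> 'a::ring_1" and \<alpha> :: "'a \<Rightarrow> 'b::ring_1"
  assumes J: "jordan_hom \<alpha>" and U: "ring_unit (e_shift s (k+2))"
  shows "ring_unit (e_shift (\<lambda>i. \<alpha> (s i)) (k+2)) \<and> ring_unit (F (\<lambda>i. \<alpha> (s i)) (k+2))"
proof -
  obtain y where y: "e_shift s (k+2)*y = 1" "y*e_shift s (k+2) = 1" using U unfolding ring_unit_def by auto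
  obtain z where z: "F s (k+2)*z = 1" "z*F s (k+2) = 1" using unit_star[OF U] unfolding ring_unit_def by auto
  have "QQ s (k+2) (y*z) = (e_shift s (k+2)*y)*(z*F s (k+2))" unfolding QQ_def by (simp add: mult.assoc)
  then have "QQ s (k+2) (y*z) = 1" using y z by simp
  then have "QQ (\<lambda>i. \<alpha> (s i)) (k+2) (\<alpha> (y*z)) = 1" using QY_pres[OF J, of s "k+2"] jh_basic(2)[OF J] by metis
  then have e: "e_shift (\<lambda>i. \<alpha> (s i)) (k+2) * (\<alpha> (y*z) * F (\<lambda>i. \<alpha> (s i)) (k+2)) = 1"
     "(e_shift (\<lambda>i. \<alpha> (s i)) (k+2) * \<alpha> (y*z)) * F (\<lambda>i. \<alpha> (s i)) (k+2) = 1"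
    unfolding QQ_def by (simp_all add: mult.assoc)
  have u1: "ring_unit (e_shift (\<lambda>i. \<alpha> (s i)) (k+2))" by (rule unit_from_sides[OF e(1) e(2)])
  then show ?thesis using unit_star[OF u1] by simp
qed


lemma part_b:
  fixes s :: "nat \<Rightarrow> 'a::ring_1" and \<alpha> :: "'a \<Rightarrow> 'b::ring_1"
  assumes J: "jordan_hom \<alpha>" and U: "ring_unit (e_shift s (n+2))" and Z: "e_shift s (n+1) = 0"
  shows "e_shift (\<lambda>i. \<alpha> (s i)) (n+1) = 0"
proof (cases n)
  case 0 then show ?thesis by simp
next
  case (Suc m)
  note B = jh_basic[OF J]
  show ?thesis
  proof (cases m)
    case 0
    have "(1::'a) = 0" using Z \<open>n = Suc m\<close> 0 by (simp add: numeral_2_eq_2)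
    then have "(1::'b) = 0" using B(2,4) by metis
    then have "\<And>x::'b. x = 0" by (metis mult_1_left mult_zero_left)
    then show ?thesis by blast
  next
    case (Suc k)
    have nk: "n = k+2" using \<open>n = Suc m\<close> Suc by simp
    have "e_shift s (n+2) = e_shift s (n+1) * s n - e_shift s n" by (simp add: numeral_2_eq_2)
    then have "e_shift s (k+2) = - e_shift s (n+2)" using Z nk by simp
    then have Uk: "ring_unit (e_shift s (k+2))" using U unfolding ring_unit_def
      by (metis minus_mult_minus)
    have "e_shift s (n+1) = e_shift s (k+2) * s (k+1) - e_shift s (k+1)" using nk
      by (simp add: numeral_2_eq_2)
    then have r: "e_shift s (k+2) * s (k+1) = e_shift s (k+1)" using Z by simp
    have "QQ s (k+2) (s (k+1)) = e_shift s (k+1) * F s (Suc (k+1))"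
      unfolding QQ_def using r by simp
    then have "\<alpha> (QQ s (k+2) (s (k+1))) = e_shift (\<lambda>i. \<alpha> (s i)) (k+1) * F (\<lambda>i. \<alpha> (s i)) (Suc (k+1))"
      using W_pres[OF J, of s "k+1"] by simp
    then have eq: "e_shift (\<lambda>i. \<alpha> (s i)) (k+2) * \<alpha> (s (k+1)) * F (\<lambda>i. \<alpha> (s i)) (k+2)
       = e_shift (\<lambda>i. \<alpha> (s i)) (k+1) * F (\<lambda>i. \<alpha> (s i)) (k+2)"
      using QY_pres[OF J, of s "k+2"] unfolding QQ_def by simp
    obtain w where w: "F (\<lambda>i. \<alpha> (s i)) (k+2) * w = 1" using part_a[OF J Uk] unfolding ring_unit_def by auto
    have "e_shift (\<lambda>i. \<alpha> (s i)) (k+2) * \<alpha> (s (k+1)) = e_shift (\<lambda>i. \<alpha> (s i)) (k+1)"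
      using arg_cong[OF eq, of "\<lambda>x. x * w"] w by (simp add: mult.assoc)
    moreover have "e_shift (\<lambda>i. \<alpha> (s i)) (n+1) = e_shift (\<lambda>i. \<alpha> (s i)) (k+2) * \<alpha> (s (k+1)) - e_shift (\<lambda>i. \<alpha> (s i)) (k+1)"
      using nk by (simp add: numeral_2_eq_2)
    ultimately show ?thesis by simp
  qed
qed

theorem theorem3p5:
  fixes \<alpha> :: "'a::ring_1 \<Rightarrow> 'b::ring_1" and T :: "'a list"
  assumes "jordan_hom \<alpha>"
  shows "(ring_unit (e_seq (int (length T)) T) \<longrightarrow>
            ring_unit (e_seq (int (length T)) (map \<alpha> T)))
       \<and> (ring_unit (e_seq (int (length T)) T) \<and> e_seq (int (length T) - 1) T = 0 \<longrightarrow>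
            e_seq (int (length T) - 1) (map \<alpha> T) = 0)"
proof -
  define s where "s = (\<lambda>i. if 1 \<le> i \<and> i \<le> length T then T ! (i - 1) else 0)"
  have ss: "(\<lambda>i. if 1 \<le> i \<and> i \<le> length T then map \<alpha> T ! (i - 1) else 0) = (\<lambda>i. \<alpha> (s i))"
    unfolding s_def using jh_basic(4)[OF assms] by (auto intro!: ext)
  have n1: "nat (int (length T) + 2) = length T + 2" by simp
  have n2: "nat (int (length T) - 1 + 2) = length T + 1" by simp
  have E1: "e_seq (int (length T)) T = e_shift s (length T + 2)"
    unfolding e_seq_def s_def n1 ..
  have E2: "e_seq (int (length T)) (map \<alpha> T) = e_shift (\<lambda>i. \<alpha> (s i)) (length T + 2)"
    unfolding e_seq_def length_map n1 ss ..
  have E3: "e_seq (int (length T) - 1) T = e_shift s (length T + 1)"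
    unfolding e_seq_def s_def n2 ..
  have E4: "e_seq (int (length T) - 1) (map \<alpha> T) = e_shift (\<lambda>i. \<alpha> (s i)) (length T + 1)"
    unfolding e_seq_def length_map n2 ss ..
  show ?thesis unfolding E1 E2 E3 E4 using part_a[OF assms] part_b[OF assms] by blast
qed

end
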